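(* For $n\ge 1$, the number of shallow $231$-avoiding involutions in $S_n$ equals $2^{n-1}$ (in fact every $231$-avoiding involution is shallow).
   Context: For $\pi\in S_n$: $D(\pi)=\sum_{i}|\pi_i-i|$, $I(\pi)$ is the number of inversions, $T(\pi)=n-\mathrm{cyc}(\pi)$ with $\mathrm{cyc}$ the number of cycles in the disjoint cycle decomposition; $\pi$ is shallow if $I(\pi)+T(\pi)=D(\pi)$. A permutation avoids a pattern $\sigma$ if it has no subsequence order-isomorphic to $\sigma$. An involution is a permutation with $\pi=\pi^{-1}$. *)

theory Defs
  imports "HOL-Combinatorics.Permutations"
begin

text \<open>Permutations of S_n are modelled as functions nat => nat that permute {1..n}.\<close>

definition displacement :: "nat \<Rightarrow> (nat \<Rightarrow> nat) \<Rightarrow> int" where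
  "displacement n p = (\<Sum>i\<in>{1..n}. \<bar>int (p i) - int i\<bar>)"

definition inversions :: "nat \<Rightarrow> (nat \<Rightarrow> nat) \<Rightarrow> nat" where
  "inversions n p = card {(i, j). i \<in> {1..n} \<and> j \<in> {1..n} \<and> i < j \<and> p i > p j}"

definition cycle_of :: "(nat \<Rightarrow> nat) \<Rightarrow> nat \<Rightarrow> nat set" where
  "cycle_of p i = {(p ^^ k) i | k. True}"

definition num_cycles :: "nat \<Rightarrow> (nat \<Rightarrow> nat) \<Rightarrow> nat" where
  "num_cycles n p = card (cycle_of p ` {1..n})"

definition reflection_length :: "nat \<Rightarrow> (nat \<Rightarrow> nat) \<Rightarrow> nat" where
  "reflection_length n p = n - num_cycles n p"

definition shallow :: "nat \<Rightarrow> (nat \<Rightarrow> nat) \<Rightarrow> bool" where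
  "shallow n p \<longleftrightarrow>
     int (inversions n p) + int (reflection_length n p) = displacement n p"

definition avoids_231 :: "nat \<Rightarrow> (nat \<Rightarrow> nat) \<Rightarrow> bool" where
  "avoids_231 n p \<longleftrightarrow>
     \<not> (\<exists>i j k. 1 \<le> i \<and> i < j \<and> j < k \<and> k \<le> n \<and> p k < p i \<and> p i < p j)"

definition involution :: "nat \<Rightarrow> (nat \<Rightarrow> nat) \<Rightarrow> bool" where
  "involution n p \<longleftrightarrow> p permutes {1..n} \<and> (\<forall>i. p (p i) = i)"

end

theory Submission
  imports Defs
begin

definition S :: "nat \<Rightarrow> (nat \<Rightarrow> nat) set" where
  "S n = {p. p permutes {1..n} \<and> involution n p \<and> avoids_231 n p}"

definition ext :: "nat \<Rightarrow> nat \<Rightarrow> (nat \<Rightarrow> nat) \<Rightarrow> nat \<Rightarrow> nat" where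
  "ext a m q i = (if i \<le> a then q i else if i \<le> a + m then 2*a+m+1-i else i)"

lemma invol_permutes:
  assumes "\<And>i. p (p i) = i" "\<And>i. i \<notin> A \<Longrightarrow> p i = i"
  shows "p permutes A"
  unfolding permutes_def using assms by metis

lemma funpow_invol: assumes "\<And>i. p (p i) = i"
  shows "(p ^^ k) i = (if even k then i else p i)"
  by (induction k) (auto simp: assms)

lemma cycle_of_invol: assumes "\<And>i. p (p i) = i"
  shows "cycle_of p i = {i, p i}"
proof -
  have "cycle_of p i \<subseteq> {i, p i}" unfolding cycle_of_def using funpow_invol[OF assms] by auto
  moreover have "i \<in> cycle_of p i" unfolding cycle_of_def by (metis (mono_tags, lifting) funpow_0 mem_Collect_eq)
  moreover have "p i \<in> cycle_of p i" unfolding cycle_of_def by (metis (mono_tags, lifting) One_nat_def funpow.simps comp_id funpow_0 mem_Collect_eq)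
  ultimately show ?thesis by auto
qed

lemma num_cycles_invol:
  assumes inv: "\<And>i. p (p i) = i" and perm: "p permutes {1..n}"
  shows "num_cycles n p = card {i\<in>{1..n}. i \<le> p i}"
proof -
  let ?B = "{i\<in>{1..n}. i \<le> p i}"
  have img: "cycle_of p ` {1..n} = (\<lambda>i. {i, p i}) ` ?B"
  proof
    show "cycle_of p ` {1..n} \<subseteq> (\<lambda>i. {i, p i}) ` ?B"
    proof
      fix X assume "X \<in> cycle_of p ` {1..n}"
      then obtain i where i: "i \<in> {1..n}" "X = {i, p i}" using cycle_of_invol[OF inv] by auto
      show "X \<in> (\<lambda>i. {i, p i}) ` ?B"
      proof (cases "i \<le> p i")
        case True then show ?thesis using i by auto
      next
        case False
        have "p i \<in> {1..n}" using perm i(1) by (meson permutes_in_image)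
        then have "p i \<in> ?B" using False inv[of i] by auto
        moreover have "X = {p i, p (p i)}" using i inv[of i] by auto
        ultimately show ?thesis by blast
      qed
    qed
  next
    show "(\<lambda>i. {i, p i}) ` ?B \<subseteq> cycle_of p ` {1..n}" using cycle_of_invol[OF inv] by auto
  qed
  have "inj_on (\<lambda>i. {i, p i}) ?B"
  proof (rule inj_onI)
    fix i j assume "i \<in> ?B" "j \<in> ?B" "{i, p i} = {j, p j}"
    then show "i = j" by (auto simp: doubleton_eq_iff)
  qed
  then show ?thesis unfolding num_cycles_def img by (simp add: card_image)
qed

lemma disp_block: "(\<Sum>j<m. \<bar>int m - 1 - 2 * int j\<bar>) = int (m*m div 2)"
proof (induction m rule: less_induct)
  case (less m)
  show ?case
  proof (cases "m < 2")
    case True then show ?thesis by (cases m) auto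
  next
    case False
    then obtain k where m: "m = Suc (Suc k)" by (metis add_2_eq_Suc le_add_diff_inverse not_less)
    have "(\<Sum>j<m. \<bar>int m - 1 - 2 * int j\<bar>) = int m - 1 + (\<Sum>j<Suc k. \<bar>int m - 1 - 2 * int (Suc j)\<bar>)"
      unfolding m by (subst sum.lessThan_Suc_shift) simp
    also have "(\<Sum>j<Suc k. \<bar>int m - 1 - 2 * int (Suc j)\<bar>) = (\<Sum>j<k. \<bar>int k - 1 - 2 * int j\<bar>) + (int k + 1)"
      unfolding m by (simp add: algebra_simps)
    also have "(\<Sum>j<k. \<bar>int k - 1 - 2 * int j\<bar>) = int (k*k div 2)" using less m by simp
    finally show ?thesis unfolding m by (simp add: algebra_simps)
  qed
qed

lemma card_pairs: "2 * card {(i,j). a < i \<and> i < j \<and> j \<le> a + m} = m * (m - 1)"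
proof (induction m)
  case 0
  have "{(i,j). a < i \<and> i < j \<and> j \<le> a + 0} = {}" by auto
  then show ?case by (metis card.empty mult_0 mult_0_right)
next
  case (Suc m)
  have eq: "{(i,j). a < i \<and> i < j \<and> j \<le> a + Suc m} = {(i,j). a < i \<and> i < j \<and> j \<le> a + m} \<union> (\<lambda>i. (i, a + Suc m)) ` {a<..a+m}"
    by auto
  have fin: "finite {(i,j). a < i \<and> i < j \<and> j \<le> a + m}"
    by (rule finite_subset[of _ "{..a+m} \<times> {..a+m}"]) auto
  have "card {(i,j). a < i \<and> i < j \<and> j \<le> a + Suc m} = card {(i,j). a < i \<and> i < j \<and> j \<le> a + m} + m"
    unfolding eq by (subst card_Un_disjoint) (auto simp: fin card_image inj_on_def)
  then show ?case using Suc by (cases m) (auto simp: algebra_simps)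
qed


lemma S_structure:
  assumes pS: "p \<in> S n" and n1: "n \<ge> 1"
  defines "a \<equiv> p n - 1"
  shows "a < n" and "(\<lambda>i. if i \<le> a then p i else i) \<in> S a"
    and "p = ext a (n - a) (\<lambda>i. if i \<le> a then p i else i)"
proof -
  have perm: "p permutes {1..n}" and inv: "\<And>i. p (p i) = i" and av: "avoids_231 n p"
    using pS unfolding S_def involution_def by auto
  have img: "\<And>i. i \<in> {1..n} \<Longrightarrow> p i \<in> {1..n}" using perm by (meson permutes_in_image)
  have out: "\<And>i. i \<notin> {1..n} \<Longrightarrow> p i = i" using perm by (meson permutes_not_in)
  define k where "k = p n"
  have k: "1 \<le> k" "k \<le> n" using img[of n] n1 unfolding k_def by auto
  have pk: "p k = n" using inv unfolding k_def by simp
  have A: "p i < k" if "i < k" for i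
  proof (cases "i = 0")
    case True then show ?thesis using out[of 0] k by auto
  next
    case False
    have i1: "i \<in> {1..n}" using False that k by auto
    show ?thesis
    proof (rule ccontr)
      assume "\<not> p i < k"
      moreover have "p i \<noteq> k" using inv[of i] pk that k by auto
      ultimately have gt: "p i > k" by simp
      have "p i \<noteq> n" using inv[of i] k_def that by (metis less_irrefl)
      then have lt: "p i < n" using img[OF i1] by auto
      have "1 \<le> i \<and> i < k \<and> k < n \<and> n \<le> n \<and> p n < p i \<and> p i < p k"
        using False that gt lt pk k_def by auto
      then show False using av unfolding avoids_231_def by blast
    qed
  qed
  have C: "k \<le> p i \<and> p i \<le> n" if "k \<le> i" "i \<le> n" for i
  proof -
    have "p i \<in> {1..n}" using img that k by auto
    moreover have "\<not> p i < k" using A[of "p i"] inv[of i] that by auto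
    ultimately show ?thesis by auto
  qed
  have D: "p (Suc i) < p i" if "k \<le> i" "i < n" for i
  proof (rule ccontr)
    assume "\<not> p (Suc i) < p i"
    moreover have "p (Suc i) \<noteq> p i" using inv[of i] inv[of "Suc i"] by (metis n_not_Suc_n)
    ultimately have lt: "p i < p (Suc i)" by simp
    have C1: "k \<le> p i" "p (Suc i) \<le> n" using C that by auto
    have "p (Suc i) \<noteq> n" using inv[of "Suc i"] k_def that by (metis Suc_n_not_le_n le_SucI)
    with C1 have lt2: "p (Suc i) < n" by simp
    have "i \<noteq> k" using pk lt lt2 by auto
    then have "k < i" using that by simp
    then have "1 \<le> p i \<and> p i < p (Suc i) \<and> p (Suc i) < n \<and> n \<le> n \<and> p n < p (p i) \<and> p (p i) < p (p (Suc i))"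
      using C1 k lt lt2 inv k_def by auto
    then show False using av unfolding avoids_231_def by blast
  qed
  have E: "p (k + t) \<le> n - t" if "k + t \<le> n" for t
    using that
  proof (induction t)
    case 0 then show ?case using pk by simp
  next
    case (Suc t)
    then have "p (Suc (k + t)) < p (k + t)" using D[of "k+t"] by simp
    then show ?case using Suc by simp
  qed
  have F: "k + t \<le> p (n - t)" if "k + t \<le> n" for t
    using that
  proof (induction t)
    case 0 then show ?case using k_def by simp
  next
    case (Suc t)
    have "Suc (n - Suc t) = n - t" using Suc by simp
    then have "p (n - t) < p (n - Suc t)" using D[of "n - Suc t"] Suc by simp
    then show ?case using Suc by simp
  qed
  have G: "p i = n + k - i" if "k \<le> i" "i \<le> n" for i
  proof -
    have "p i \<le> n - (i - k)" using E[of "i - k"] that by simp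
    moreover have "k + (n - i) \<le> p i" using F[of "n - i"] that by simp
    ultimately show ?thesis using that by simp
  qed
  have ak: "a = k - 1" unfolding a_def k_def by simp
  show "a < n" using k ak by simp
  define q where "q = (\<lambda>i. if i \<le> a then p i else i)"
  have qa: "q i \<le> a" if "i \<le> a" for i
  proof -
    have "i < k" using that ak k by simp
    then have "p i < k" by (rule A)
    then show ?thesis using that ak unfolding q_def by simp
  qed
  have qinv: "q (q i) = i" for i
    using qa[of i] inv[of i] unfolding q_def by (auto split: if_splits)
  have qperm: "q permutes {1..a}"
  proof (rule invol_permutes[OF qinv])
    fix i assume "i \<notin> {1..a}"
    then have "i = 0 \<or> i > a" by auto
    then show "q i = i" using out[of 0] unfolding q_def by auto
  qed
  have qav: "avoids_231 a q"
    unfolding avoids_231_def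
  proof
    assume "\<exists>i j l. 1 \<le> i \<and> i < j \<and> j < l \<and> l \<le> a \<and> q l < q i \<and> q i < q j"
    then obtain i j l where h: "1 \<le> i" "i < j" "j < l" "l \<le> a" "q l < q i" "q i < q j" by blast
    then have "q l = p l" "q i = p i" "q j = p j" unfolding q_def by auto
    then have "1 \<le> i \<and> i < j \<and> j < l \<and> l \<le> n \<and> p l < p i \<and> p i < p j" using h \<open>a < n\<close> by auto
    then show False using av unfolding avoids_231_def by blast
  qed
  show "(\<lambda>i. if i \<le> a then p i else i) \<in> S a"
    using qperm qinv qav unfolding S_def involution_def q_def[symmetric] by auto
  show "p = ext a (n - a) (\<lambda>i. if i \<le> a then p i else i)"
  proof
    fix i
    show "p i = ext a (n - a) (\<lambda>i. if i \<le> a then p i else i) i"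
    proof (cases "i \<le> a")
      case True then show ?thesis unfolding ext_def by simp
    next
      case False
      show ?thesis
      proof (cases "i \<le> n")
        case True
        then show ?thesis using G[of i] False \<open>a < n\<close> ak k unfolding ext_def by auto
      next
        case False2: False
        then show ?thesis using out[of i] False \<open>a < n\<close> unfolding ext_def by auto
      qed
    qed
  qed
qed


lemma S_facts:
  assumes "q \<in> S a"
  shows "\<And>i. q (q i) = i" "\<And>i. i \<le> a \<Longrightarrow> q i \<le> a" "\<And>i. a < i \<Longrightarrow> q i = i"
    "q permutes {1..a}" "avoids_231 a q" "q 0 = 0"
proof -
  show "q 0 = 0" using assms unfolding S_def by (auto simp: permutes_not_in)
  have perm: "q permutes {1..a}" using assms unfolding S_def by auto
  then show "q permutes {1..a}" .
  show "\<And>i. q (q i) = i" "avoids_231 a q" using assms unfolding S_def involution_def by auto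
  show "\<And>i. a < i \<Longrightarrow> q i = i" using perm by (simp add: permutes_not_in)
  fix i assume "i \<le> a"
  show "q i \<le> a"
  proof (cases "i = 0")
    case True then show ?thesis using perm by (simp add: permutes_not_in)
  next
    case False then have "i \<in> {1..a}" using \<open>i \<le> a\<close> by auto
    then show ?thesis using perm by (meson atLeastAtMost_iff permutes_in_image)
  qed
qed

lemma ext_in_S:
  assumes qS: "q \<in> S a" and m: "m \<ge> 1"
  shows "ext a m q \<in> S (a + m)"
proof -
  note qf = S_facts[OF qS]
  let ?e = "ext a m q"
  have einv: "?e (?e i) = i" for i
  proof -
    consider "i \<le> a" | "a < i \<and> i \<le> a + m" | "a + m < i" by linarith
    then show ?thesis
    proof cases
      case 1 then show ?thesis using qf(1,2)[of i] unfolding ext_def by simp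
    next
      case 2 then show ?thesis unfolding ext_def by auto
    next
      case 3 then show ?thesis unfolding ext_def by auto
    qed
  qed
  have eperm: "?e permutes {1..a+m}"
  proof (rule invol_permutes[OF einv])
    fix i assume "i \<notin> {1..a+m}"
    then have "i = 0 \<or> i > a + m" by auto
    then show "?e i = i" using qf(6) unfolding ext_def by auto
  qed
  have eav: "avoids_231 (a + m) ?e"
    unfolding avoids_231_def
  proof
    assume "\<exists>i j l. 1 \<le> i \<and> i < j \<and> j < l \<and> l \<le> a + m \<and> ?e l < ?e i \<and> ?e i < ?e j"
    then obtain i j l where h: "1 \<le> i" "i < j" "j < l" "l \<le> a + m" "?e l < ?e i" "?e i < ?e j" by blast
    show False
    proof (cases "l \<le> a")
      case True
      then have "?e l = q l" "?e i = q i" "?e j = q j" using h unfolding ext_def by auto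
      then have "1 \<le> i \<and> i < j \<and> j < l \<and> l \<le> a \<and> q l < q i \<and> q i < q j" using h True by auto
      then show False using qf(5) unfolding avoids_231_def by blast
    next
      case False
      then have "?e l > a" using h unfolding ext_def by auto
      then have ei: "?e i > a" using h by simp
      have "i > a"
      proof (rule ccontr)
        assume "\<not> i > a"
        then have "?e i = q i" "q i \<le> a" using qf(2)[of i] unfolding ext_def by auto
        then show False using ei by simp
      qed
      then have "?e i = 2*a+m+1-i" "?e j = 2*a+m+1-j" using h unfolding ext_def by auto
      then show False using h by simp
    qed
  qed
  show ?thesis using eperm einv eav unfolding S_def involution_def by auto
qed


lemma arith_block:
  fixes x m :: nat
  assumes "2 * x = m * (m - 1)"
  shows "x + m - (m + 1) div 2 = m * m div 2" "(m+1) div 2 \<le> m"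
proof -
  show "(m+1) div 2 \<le> m" by simp
  obtain t where "m = 2*t \<or> m = 2*t+1" by (metis oddE evenE)
  then show "x + m - (m + 1) div 2 = m * m div 2"
  proof
    assume mt: "m = 2*t"
    then have "2 * x = 2 * (t * (2*t - 1))" using assms by (simp add: algebra_simps)
    then have x: "x = t * (2*t - 1)" by simp
    show ?thesis
    proof (cases t)
      case 0 then show ?thesis using x mt by simp
    next
      case (Suc u)
      then show ?thesis using x mt by (simp add: algebra_simps)
    qed
  next
    assume mt: "m = 2*t+1"
    then have "2 * x = 2 * (t * (2*t + 1))" using assms by (simp add: algebra_simps)
    then have x: "x = t * (2*t + 1)" by simp
    show ?thesis using x mt by (simp add: algebra_simps)
  qed
qed

lemma ext_shallow:
  assumes qS: "q \<in> S a" and m: "m \<ge> 1" and sh: "shallow a q"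
  shows "shallow (a + m) (ext a m q)"
proof -
  note qf = S_facts[OF qS]
  let ?e = "ext a m q"
  have eS: "?e \<in> S (a + m)" using ext_in_S[OF qS m] .
  note ef = S_facts[OF eS]
  have ea: "?e i = q i" if "i \<le> a" for i using that unfolding ext_def by simp
  have eb: "?e i = 2*a+m+1-i" if "a < i" "i \<le> a + m" for i using that unfolding ext_def by simp
  define H where "H = (m + 1) div 2"
  have cyc: "num_cycles (a+m) ?e = num_cycles a q + H"
  proof -
    have "{i\<in>{1..a+m}. i \<le> ?e i} = {i\<in>{1..a}. i \<le> q i} \<union> {a+1..a+H}"
    proof (rule set_eqI)
      fix i
      show "i \<in> {i\<in>{1..a+m}. i \<le> ?e i} \<longleftrightarrow> i \<in> {i\<in>{1..a}. i \<le> q i} \<union> {a+1..a+H}"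
      proof (cases "i \<le> a")
        case True then show ?thesis using ea[of i] by auto
      next
        case False
        then show ?thesis using eb[of i] m unfolding H_def by auto
      qed
    qed
    moreover have "card ({i\<in>{1..a}. i \<le> q i} \<union> {a+1..a+H}) = card {i\<in>{1..a}. i \<le> q i} + H"
      by (subst card_Un_disjoint) auto
    ultimately show ?thesis
      using num_cycles_invol[OF qf(1) qf(4)] num_cycles_invol[OF ef(1) ef(4)] by simp
  qed
  have ca: "num_cycles a q \<le> a"
  proof -
    have "card {i\<in>{1..a}. i \<le> q i} \<le> card {1..a}" by (rule card_mono) auto
    then show ?thesis using num_cycles_invol[OF qf(1) qf(4)] by simp
  qed
  define P where "P = {(i,j). a < i \<and> i < j \<and> j \<le> a + m}"
  have finP: "finite P" unfolding P_def
    by (rule finite_subset[of _ "{..a+m} \<times> {..a+m}"]) auto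
  have inv: "inversions (a+m) ?e = inversions a q + card P"
  proof -
    let ?Iq = "{(i, j). i \<in> {1..a} \<and> j \<in> {1..a} \<and> i < j \<and> q i > q j}"
    have "{(i, j). i \<in> {1..a+m} \<and> j \<in> {1..a+m} \<and> i < j \<and> ?e i > ?e j} = ?Iq \<union> P"
    proof (rule set_eqI, clarify)
      fix i j
      show "((i, j) \<in> {(i, j). i \<in> {1..a+m} \<and> j \<in> {1..a+m} \<and> i < j \<and> ?e i > ?e j}) = ((i, j) \<in> ?Iq \<union> P)"
      proof (cases "j \<le> a")
        case True then show ?thesis using ea[of i] ea[of j] unfolding P_def by auto
      next
        case False
        show ?thesis
        proof (cases "i \<le> a")
          case True
          then have "?e i \<le> a" "?e j > a" using ea[of i] qf(2)[of i] eb[of j] False by (auto simp: ext_def)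
          then show ?thesis using False True unfolding P_def by auto
        next
          case False2: False
          then show ?thesis using eb[of i] eb[of j] False unfolding P_def by auto
        qed
      qed
    qed
    moreover have "finite ?Iq" by (rule finite_subset[of _ "{1..a} \<times> {1..a}"]) auto
    moreover have "?Iq \<inter> P = {}" unfolding P_def by auto
    ultimately show ?thesis unfolding inversions_def using finP by (simp add: card_Un_disjoint)
  qed
  have cP: "2 * card P = m * (m - 1)" unfolding P_def by (rule card_pairs)
  have disp: "displacement (a+m) ?e = displacement a q + int (m * m div 2)"
  proof -
    have split: "{1..a+m} = {1..a} \<union> {a+1..a+m}" by auto
    have s1: "(\<Sum>i\<in>{1..a}. \<bar>int (?e i) - int i\<bar>) = displacement a q"
      unfolding displacement_def using ea by simp
    have img: "{a+1..a+m} = (\<lambda>j. a+1+j) ` {..<m}"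
    proof (rule set_eqI)
      fix x show "x \<in> {a+1..a+m} \<longleftrightarrow> x \<in> (\<lambda>j. a+1+j) ` {..<m}"
        using m by (auto simp: image_iff intro!: bexI[of _ "x - a - 1"])
    qed
    have "(\<Sum>i\<in>{a+1..a+m}. \<bar>int (?e i) - int i\<bar>) = (\<Sum>j<m. \<bar>int (?e (a+1+j)) - int (a+1+j)\<bar>)"
      unfolding img by (subst sum.reindex) (auto simp: inj_on_def)
    also have "\<dots> = (\<Sum>j<m. \<bar>int m - 1 - 2 * int j\<bar>)"
    proof (rule sum.cong[OF refl])
      fix j assume "j \<in> {..<m}"
      then have "?e (a+1+j) = a + m - j" using eb[of "a+1+j"] by simp
      then show "\<bar>int (?e (a+1+j)) - int (a+1+j)\<bar> = \<bar>int m - 1 - 2 * int j\<bar>"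
        using \<open>j \<in> {..<m}\<close> by (simp add: of_nat_diff)
    qed
    also have "\<dots> = int (m * m div 2)" by (rule disp_block)
    finally have s2: "(\<Sum>i\<in>{a+1..a+m}. \<bar>int (?e i) - int i\<bar>) = int (m * m div 2)" .
    have "displacement (a+m) ?e = (\<Sum>i\<in>{1..a}. \<bar>int (?e i) - int i\<bar>) + (\<Sum>i\<in>{a+1..a+m}. \<bar>int (?e i) - int i\<bar>)"
      unfolding displacement_def split by (rule sum.union_disjoint) auto
    then show ?thesis using s1 s2 by simp
  qed
  have ar: "card P + m - H = m * m div 2" "H \<le> m" using arith_block[OF cP] unfolding H_def by auto
  have shq: "int (inversions a q) + int (a - num_cycles a q) = displacement a q"
    using sh unfolding shallow_def reflection_length_def .
  have "int (a + m - (num_cycles a q + H)) = int (a - num_cycles a q) + int (card P + m - H) - int (card P)"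
    using ca ar(2) by (simp add: of_nat_diff)
  then show ?thesis unfolding shallow_def reflection_length_def cyc inv disp
    using shq ar(1) by simp
qed


lemma S_0: "S 0 = {id}"
proof -
  have "id \<in> S 0" unfolding S_def involution_def avoids_231_def by auto
  moreover have "p = id" if "p \<in> S 0" for p using that unfolding S_def by auto
  ultimately show ?thesis by blast
qed

lemma finite_S: "finite (S a)"
  by (rule finite_subset[of _ "{p. p permutes {1..a}}"]) (auto simp: S_def finite_permutations)

lemma ext_n: "a < n \<Longrightarrow> ext a (n - a) q n = a + 1"
  unfolding ext_def by simp

lemma S_decomp:
  assumes "n \<ge> 1"
  shows "S n = (\<Union>a\<in>{..<n}. ext a (n - a) ` S a)"
proof
  show "S n \<subseteq> (\<Union>a\<in>{..<n}. ext a (n - a) ` S a)"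
  proof
    fix p assume "p \<in> S n"
    note st = S_structure[OF this assms]
    show "p \<in> (\<Union>a\<in>{..<n}. ext a (n - a) ` S a)"
      using st by blast
  qed
next
  show "(\<Union>a\<in>{..<n}. ext a (n - a) ` S a) \<subseteq> S n"
  proof
    fix p assume "p \<in> (\<Union>a\<in>{..<n}. ext a (n - a) ` S a)"
    then obtain a q where aq: "a \<in> {..<n}" "q \<in> S a" "p = ext a (n - a) q" by blast
    then have "ext a (n - a) q \<in> S (a + (n - a))" by (intro ext_in_S) auto
    then show "p \<in> S n" using aq by simp
  qed
qed

lemma card_S_rec:
  assumes "n \<ge> 1"
  shows "card (S n) = (\<Sum>a<n. card (S a))"
proof -
  have inj: "inj_on (ext a (n - a)) (S a)" for a
  proof (rule inj_onI)
    fix q q' assume q: "q \<in> S a" and q': "q' \<in> S a" and eq: "ext a (n - a) q = ext a (n - a) q'"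
    show "q = q'"
    proof
      fix i show "q i = q' i"
      proof (cases "i \<le> a")
        case True then show ?thesis using fun_cong[OF eq, of i] unfolding ext_def by simp
      next
        case False then show ?thesis using S_facts(3)[OF q, of i] S_facts(3)[OF q', of i] by simp
      qed
    qed
  qed
  have "card (S n) = (\<Sum>a<n. card (ext a (n - a) ` S a))"
    unfolding S_decomp[OF assms]
  proof (rule card_UN_disjoint)
    show "finite {..<n}" by simp
    show "\<forall>a\<in>{..<n}. finite (ext a (n - a) ` S a)" using finite_S by auto
    show "\<forall>a\<in>{..<n}. \<forall>b\<in>{..<n}. a \<noteq> b \<longrightarrow> ext a (n - a) ` S a \<inter> ext b (n - b) ` S b = {}"
    proof (intro ballI impI)
      fix a b assume ab: "a \<in> {..<n}" "b \<in> {..<n}" "a \<noteq> b"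
      show "ext a (n - a) ` S a \<inter> ext b (n - b) ` S b = {}"
      proof (rule ccontr)
        assume "ext a (n - a) ` S a \<inter> ext b (n - b) ` S b \<noteq> {}"
        then obtain q r where "ext a (n - a) q = ext b (n - b) r" by blast
        then have "ext a (n - a) q n = ext b (n - b) r n" by simp
        then show False using ext_n[of a n q] ext_n[of b n r] ab by simp
      qed
    qed
  qed
  also have "\<dots> = (\<Sum>a<n. card (S a))" using inj by (simp add: card_image)
  finally show ?thesis .
qed

lemma sum_pow: "n \<ge> 1 \<Longrightarrow> (\<Sum>a<n. (if a = 0 then 1 else 2^(a-1)::nat)) = 2^(n-1)"
proof (induction n)
  case 0 then show ?case by simp
next
  case (Suc n)
  show ?case
  proof (cases "n = 0")
    case True then show ?thesis by simp
  next
    case False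
    then have "(\<Sum>a<Suc n. (if a = 0 then 1 else 2^(a-1)::nat)) = 2^(n-1) + 2^(n-1)"
      using Suc by simp
    also have "\<dots> = 2^n" using False by (cases n) auto
    finally show ?thesis by simp
  qed
qed

lemma card_S: "card (S n) = (if n = 0 then 1 else 2^(n-1))"
proof (induction n rule: less_induct)
  case (less n)
  show ?case
  proof (cases "n = 0")
    case True then show ?thesis using S_0 by simp
  next
    case False
    then have "card (S n) = (\<Sum>a<n. card (S a))" using card_S_rec by simp
    also have "\<dots> = (\<Sum>a<n. (if a = 0 then 1 else 2^(a-1)::nat))"
      using less by (intro sum.cong) auto
    also have "\<dots> = 2^(n-1)" using False sum_pow by simp
    finally show ?thesis using False by simp
  qed
qed

lemma S_shallow: "p \<in> S n \<Longrightarrow> shallow n p"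
proof (induction n arbitrary: p rule: less_induct)
  case (less n)
  show ?case
  proof (cases "n = 0")
    case True
    then have "p = id" using less.prems S_0 by simp
    then show ?thesis using True
      unfolding shallow_def inversions_def reflection_length_def displacement_def by simp
  next
    case False
    then have n1: "n \<ge> 1" by simp
    note st = S_structure[OF less.prems n1]
    define a where "a = p n - 1"
    define q where "q = (\<lambda>i. if i \<le> a then p i else i)"
    have an: "a < n" unfolding a_def by (fact st(1))
    have qS: "q \<in> S a" unfolding a_def q_def by (fact st(2))
    have pe: "p = ext a (n - a) q" unfolding a_def q_def by (fact st(3))
    have "shallow a q" using less.IH[OF an qS] .
    then have "shallow (a + (n - a)) (ext a (n - a) q)"
      using an by (intro ext_shallow[OF qS]) auto
    then show ?thesis using pe an by simp
  qed
qed

theorem theorem4p6: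
  fixes n :: nat
  assumes "n \<ge> 1"
  shows "card {p. p permutes {1..n} \<and> involution n p \<and> avoids_231 n p \<and> shallow n p}
           = 2 ^ (n - 1)
       \<and> (\<forall>p. p permutes {1..n} \<and> involution n p \<and> avoids_231 n p \<longrightarrow> shallow n p)"
proof
  have "{p. p permutes {1..n} \<and> involution n p \<and> avoids_231 n p \<and> shallow n p} = S n"
    using S_shallow unfolding S_def by blast
  then show "card {p. p permutes {1..n} \<and> involution n p \<and> avoids_231 n p \<and> shallow n p} = 2 ^ (n - 1)"
    using card_S[of n] assms by simp
  show "\<forall>p. p permutes {1..n} \<and> involution n p \<and> avoids_231 n p \<longrightarrow> shallow n p"
    using S_shallow unfolding S_def by blast
qed

end
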